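(* Let $k$, $n$, and $d$ be positive integers with $n\geq 2d$, $\gcd(n,d)=1$, and $\frac{n}{d}<k$. If $G$ is a finite, simple, undirected, connected graph with $\chi(G)=k$ and $\chi_c(G)=\frac{n}{d}$, then $G$ has a $k$-coloring $f$ such that (1) for at least $\left(\frac{\chi(G)(\chi_c(G)+1-\chi(G))}{\chi_c(G)}\right)|V(G)|$ vertices $u$ of $G$, some full $f$-rainbow path begins at $u$, and (2) for each of the remaining vertices $v$ of $G$, some $f$-rainbow path of order $k-1$ begins at $v$.
   Context: For a positive integer $k$, $[k]=\{1,\dots,k\}$. A $k$-coloring of $G$ is a function $f:V(G)\to[k]$ with $f(u)\neq f(v)$ for every two adjacent vertices $u,v$; $\chi(G)$ is the minimum $k$ for which a $k$-coloring exists. For positive integers $n,d$ with $n\ge 2d$ and $\gcd(n,d)=1$, an $(n,d)$-coloring of $G$ is a function $c:V(G)\to[n]$ with $d\le |c(u)-c(v)|\le n-d$ for every two adjacent vertices $u,v$. The circular chromatic number $\chi_c(G)$ is the infimum (in fact a minimum) of $n/d$ over all $(n,d)$-colorings of $G$. For a $k$-coloring $f$, an $f$-rainbow path is a path in $G$ whose vertices have pairwise distinct colors under $f$; it is full if it has order (number of vertices) $k$. A path begins at $u$ if $u$ is one of its end vertices. *)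

theory Defs
  imports Complex_Main
begin

definition simple_graph :: "'a set \<Rightarrow> ('a \<Rightarrow> 'a \<Rightarrow> bool) \<Rightarrow> bool" where
  "simple_graph V E \<longleftrightarrow> finite V \<and>
     (\<forall>u v. E u v \<longrightarrow> u \<in> V \<and> v \<in> V \<and> u \<noteq> v \<and> E v u)"

text \<open>A path, given as the (nonempty) list of its distinct vertices in order;
its order is the length of the list.\<close>
definition is_path :: "'a set \<Rightarrow> ('a \<Rightarrow> 'a \<Rightarrow> bool) \<Rightarrow> 'a list \<Rightarrow> bool" where
  "is_path V E ps \<longleftrightarrow> ps \<noteq> [] \<and> distinct ps \<and> set ps \<subseteq> V \<and>
     (\<forall>i. Suc i < length ps \<longrightarrow> E (ps ! i) (ps ! Suc i))"

definition connected_graph :: "'a set \<Rightarrow> ('a \<Rightarrow> 'a \<Rightarrow> bool) \<Rightarrow> bool" where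
  "connected_graph V E \<longleftrightarrow> V \<noteq> {} \<and>
     (\<forall>u\<in>V. \<forall>v\<in>V. \<exists>ps. is_path V E ps \<and> hd ps = u \<and> last ps = v)"

definition coloring :: "'a set \<Rightarrow> ('a \<Rightarrow> 'a \<Rightarrow> bool) \<Rightarrow> nat \<Rightarrow> ('a \<Rightarrow> nat) \<Rightarrow> bool" where
  "coloring V E k f \<longleftrightarrow> (\<forall>v\<in>V. f v \<in> {1..k}) \<and>
     (\<forall>u\<in>V. \<forall>v\<in>V. E u v \<longrightarrow> f u \<noteq> f v)"

definition chromatic_number :: "'a set \<Rightarrow> ('a \<Rightarrow> 'a \<Rightarrow> bool) \<Rightarrow> nat" where
  "chromatic_number V E = (LEAST k. \<exists>f. coloring V E k f)"

definition nd_coloring :: "'a set \<Rightarrow> ('a \<Rightarrow> 'a \<Rightarrow> bool) \<Rightarrow> nat \<Rightarrow> nat \<Rightarrow> ('a \<Rightarrow> nat) \<Rightarrow> bool" where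
  "nd_coloring V E n d c \<longleftrightarrow> (\<forall>v\<in>V. c v \<in> {1..n}) \<and>
     (\<forall>u\<in>V. \<forall>v\<in>V. E u v \<longrightarrow>
        int d \<le> \<bar>int (c u) - int (c v)\<bar> \<and> \<bar>int (c u) - int (c v)\<bar> \<le> int n - int d)"

definition circular_chromatic_number :: "'a set \<Rightarrow> ('a \<Rightarrow> 'a \<Rightarrow> bool) \<Rightarrow> real" where
  "circular_chromatic_number V E =
     Inf {real n / real d | n d. 0 < n \<and> 0 < d \<and> 2 * d \<le> n \<and> gcd n d = 1 \<and>
                               (\<exists>c. nd_coloring V E n d c)}"

definition rainbow_path :: "'a set \<Rightarrow> ('a \<Rightarrow> 'a \<Rightarrow> bool) \<Rightarrow> ('a \<Rightarrow> nat) \<Rightarrow> 'a list \<Rightarrow> bool" where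
  "rainbow_path V E f ps \<longleftrightarrow> is_path V E ps \<and> inj_on f (set ps)"

definition begins_at :: "'a list \<Rightarrow> 'a \<Rightarrow> bool" where
  "begins_at ps u \<longleftrightarrow> ps \<noteq> [] \<and> (hd ps = u \<or> last ps = u)"

end

theory Submission
  imports Defs
begin

definition tight :: "('a \<Rightarrow> 'a \<Rightarrow> bool) \<Rightarrow> nat \<Rightarrow> nat \<Rightarrow> ('a \<Rightarrow> nat) \<Rightarrow> 'a \<Rightarrow> 'a \<Rightarrow> bool" where
  "tight E n d c u v \<longleftrightarrow> E u v \<and> (int (c v) - int (c u)) mod int n = int d"

definition reach :: "('a \<Rightarrow> 'a \<Rightarrow> bool) \<Rightarrow> nat \<Rightarrow> nat \<Rightarrow> ('a \<Rightarrow> nat) \<Rightarrow> 'a set" where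
  "reach E n d c = {v. \<exists>s. s 0 = v \<and> (\<forall>i. tight E n d c (s i) (s (Suc i)))}"

lemma mod_dist_iff:
  fixes z n d :: int
  assumes "0 < d" "\<bar>z\<bar> < n"
  shows "(d \<le> \<bar>z\<bar> \<and> \<bar>z\<bar> \<le> n - d) \<longleftrightarrow> (d \<le> z mod n \<and> z mod n \<le> n - d)"
proof (cases "z \<ge> 0")
  case True
  then have "z mod n = z" using assms by (simp add: mod_pos_pos_trivial)
  then show ?thesis using True by simp
next
  case False
  then have "(z + n) mod n = z + n" using assms by (intro mod_pos_pos_trivial) auto
  then have "z mod n = z + n" by simp
  then show ?thesis using False by auto
qed

lemma nd_mod:
  assumes "0 < d"
  shows "nd_coloring V E n d c \<longleftrightarrow> (\<forall>v\<in>V. c v \<in> {1..n}) \<and>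
     (\<forall>u\<in>V. \<forall>v\<in>V. E u v \<longrightarrow> int d \<le> (int (c u) - int (c v)) mod int n \<and>
         (int (c u) - int (c v)) mod int n \<le> int n - int d)"
proof -
  have P: "\<And>u v. c u \<in> {1..n} \<Longrightarrow> c v \<in> {1..n} \<Longrightarrow>
     (int d \<le> \<bar>int (c u) - int (c v)\<bar> \<and> \<bar>int (c u) - int (c v)\<bar> \<le> int n - int d) \<longleftrightarrow>
     (int d \<le> (int (c u) - int (c v)) mod int n \<and> (int (c u) - int (c v)) mod int n \<le> int n - int d)"
    by (rule mod_dist_iff) (use assms in auto)
  show ?thesis
  proof
    assume A: "nd_coloring V E n d c"
    then have cv: "\<forall>v\<in>V. c v \<in> {1..n}" by (simp add: nd_coloring_def)
    moreover
    { fix u v assume uv: "u\<in>V" "v\<in>V" "E u v"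
      then have "int d \<le> \<bar>int (c u) - int (c v)\<bar> \<and> \<bar>int (c u) - int (c v)\<bar> \<le> int n - int d"
        using A unfolding nd_coloring_def by blast
      then have "int d \<le> (int (c u) - int (c v)) mod int n \<and> (int (c u) - int (c v)) mod int n \<le> int n - int d"
        using P[of u v] cv uv by blast }
    ultimately show "(\<forall>v\<in>V. c v \<in> {1..n}) \<and>
     (\<forall>u\<in>V. \<forall>v\<in>V. E u v \<longrightarrow> int d \<le> (int (c u) - int (c v)) mod int n \<and>
         (int (c u) - int (c v)) mod int n \<le> int n - int d)" by blast
  next
    assume A: "(\<forall>v\<in>V. c v \<in> {1..n}) \<and>
     (\<forall>u\<in>V. \<forall>v\<in>V. E u v \<longrightarrow> int d \<le> (int (c u) - int (c v)) mod int n \<and>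
         (int (c u) - int (c v)) mod int n \<le> int n - int d)"
    then have cv: "\<forall>v\<in>V. c v \<in> {1..n}" by blast
    moreover
    { fix u v assume uv: "u\<in>V" "v\<in>V" "E u v"
      then have "int d \<le> (int (c u) - int (c v)) mod int n \<and> (int (c u) - int (c v)) mod int n \<le> int n - int d"
        using A by blast
      then have "int d \<le> \<bar>int (c u) - int (c v)\<bar> \<and> \<bar>int (c u) - int (c v)\<bar> \<le> int n - int d"
        using P[of u v] cv uv by blast }
    ultimately show "nd_coloring V E n d c" unfolding nd_coloring_def by blast
  qed
qed

lemma mod_cond_neg:
  fixes z n d :: int
  assumes "0 < d"
  shows "(d \<le> z mod n \<and> z mod n \<le> n - d) \<longleftrightarrow> (d \<le> (-z) mod n \<and> (-z) mod n \<le> n - d)"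
  using assms by (auto simp: zmod_zminus1_eq_if)

lemma sep_div:
  fixes x y n d :: int
  assumes "0 < d" "0 \<le> x" "x < n" "0 \<le> y" "y < n" "d \<le> (y - x) mod n" "(y - x) mod n \<le> n - d"
  shows "x div d \<noteq> y div d"
proof
  assume eq: "x div d = y div d"
  have "\<bar>y - x\<bar> < n" using assms by auto
  then have "d \<le> \<bar>y - x\<bar>" using mod_dist_iff[of d "y - x" n] assms by auto
  moreover have ex: "x = d * (x div d) + x mod d" by (metis div_mult_mod_eq mult.commute)
  have ey: "y = d * (x div d) + y mod d" using eq by (metis div_mult_mod_eq mult.commute)
  have "y - x = y mod d - x mod d" using ex ey by linarith
  moreover have "0 \<le> x mod d" "x mod d < d" "0 \<le> y mod d" "y mod d < d" using assms by auto
  ultimately have "d \<le> \<bar>(y mod d) - (x mod d)\<bar>" by simp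
  then show False using \<open>x mod d < d\<close> \<open>y mod d < d\<close> \<open>0 \<le> x mod d\<close> \<open>0 \<le> y mod d\<close> by linarith
qed

lemma walk_V:
  assumes "simple_graph V E" "\<forall>i. tight E n d c (s i) (s (Suc i))"
  shows "s i \<in> V"
  using assms unfolding simple_graph_def tight_def by blast

lemma walk_mod:
  assumes "\<forall>i. tight E n d c (s i) (s (Suc i))"
  shows "(int (c (s (i + j))) - int (c (s i))) mod int n = (int j * int d) mod int n"
proof (induction j)
  case 0 then show ?case by simp
next
  case (Suc j)
  have t: "(int (c (s (Suc (i + j)))) - int (c (s (i+j)))) mod int n = int d"
    using assms unfolding tight_def by blast
  have "int (c (s (i + Suc j))) - int (c (s i)) =
     (int (c (s (Suc (i + j)))) - int (c (s (i+j)))) + (int (c (s (i + j))) - int (c (s i)))" by simp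
  then have "(int (c (s (i + Suc j))) - int (c (s i))) mod int n =
     ((int (c (s (Suc (i + j)))) - int (c (s (i+j)))) mod int n + (int (c (s (i + j))) - int (c (s i))) mod int n) mod int n"
    by (metis mod_add_eq)
  also have "\<dots> = (int d + int j * int d) mod int n" using t Suc by (simp add: mod_add_right_eq)
  finally show ?case by (simp add: algebra_simps)
qed

lemma walk_path:
  assumes sg: "simple_graph V E" and w: "\<forall>i. E (s i) (s (Suc i))" and m: "0 < m"
    and dist: "\<And>i j. i < j \<Longrightarrow> j < m \<Longrightarrow> s i \<noteq> s j \<and> g (s i) \<noteq> g (s j)"
  shows "rainbow_path V E g (map s [0..<m]) \<and> length (map s [0..<m]) = m \<and> begins_at (map s [0..<m]) (s 0)"
proof -
  have V: "s i \<in> V" for i using sg w unfolding simple_graph_def by blast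
  have inj: "inj_on s {0..<m}"
    unfolding inj_on_def by (metis atLeastLessThan_iff dist linorder_neqE_nat)
  have injg: "inj_on g (s ` {0..<m})"
    unfolding inj_on_def by (auto, metis dist linorder_neqE_nat)
  have ne: "map s [0..<m] \<noteq> []" using m by simp
  have hd: "hd (map s [0..<m]) = s 0" using m by (simp add: hd_map upt_conv_Cons)
  show ?thesis
    unfolding rainbow_path_def is_path_def begins_at_def
    using ne hd inj injg V w by (auto simp: distinct_map)
qed

lemma good_div:
  fixes K D L N x :: int
  assumes "0 < D" "0 < L" "L < D" "1 \<le> K" "N = K * D + L" "0 \<le> x" "x < N" "x mod D < L"
  shows "x div D \<noteq> ((x + K * D) mod N) div D"
proof (cases "x < L")
  case True
  then have x0: "x div D = 0" using assms by simp
  have "(x + K * D) mod N = x + K * D" using assms True by (intro mod_pos_pos_trivial) auto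
  moreover have "(x + K * D) div D = x div D + K" using assms by simp
  ultimately show ?thesis using x0 assms by simp
next
  case False
  have e1: "x + K * D = (x - L) + N" using assms by simp
  have "(x + K * D) mod N = ((x - L) + N) mod N" by (simp only: e1)
  also have "\<dots> = (x - L) mod N" by (rule mod_add_self2)
  finally have "(x + K * D) mod N = (x - L) mod N" .
  also have "\<dots> = x - L" using assms False by (intro mod_pos_pos_trivial) auto
  finally have "(x + K * D) mod N = x - L" .
  moreover have "x - L = (x mod D + D - L) + (x div D - 1) * D"
    by (simp add: algebra_simps)
  moreover have "(x mod D + D - L) div D = 0"
  proof -
    have "0 \<le> x mod D" "x mod D < D" using assms by auto
    then have "0 \<le> x mod D + D - L" "x mod D + D - L < D" using assms by linarith+
    then show ?thesis by (rule div_pos_pos_trivial)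
  qed
  ultimately have "((x + K * D) mod N) div D = x div D - 1" using assms by simp
  then show ?thesis by simp
qed

lemma div_lt_k:
  fixes a D K :: int
  assumes "0 < D" "0 \<le> a" "a < K * D"
  shows "a div D < K"
proof (rule ccontr)
  assume "\<not> a div D < K"
  then have "K * D \<le> (a div D) * D" using assms by (simp add: mult_right_mono)
  also have "\<dots> \<le> a" using assms by (metis div_mult_mod_eq le_add_same_cancel1 pos_mod_sign)
  finally show False using assms by simp
qed

lemma final_part:
  fixes V :: "'a set" and E and k n0 d0 :: nat and c :: "'a \<Rightarrow> nat"
  assumes sg: "simple_graph V E" and ndc: "nd_coloring V E n0 d0 c" and d0: "0 < d0" and k2: "2 \<le> k"
    and lo: "(k-1)*d0 < n0" and hi: "n0 < k*d0" and allr: "V \<subseteq> reach E n0 d0 c"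
  shows "\<exists>f S. coloring V E k f \<and> S \<subseteq> V \<and>
     real k * real (n0 - (k-1)*d0) * real (card V) \<le> real (card S) * real n0 \<and>
     (\<forall>u\<in>S. \<exists>ps. rainbow_path V E f ps \<and> length ps = k \<and> begins_at ps u) \<and>
     (\<forall>v\<in>V - S. \<exists>ps. rainbow_path V E f ps \<and> length ps = k - 1 \<and> begins_at ps v)"
proof -
  define N where "N = int n0"
  define D where "D = int d0"
  define K where "K = int k - 1"
  define L where "L = N - K * D"
  have D0: "0 < D" using d0 D_def by simp
  have K1: "1 \<le> K" using k2 K_def by simp
  have kk: "int (k-1) = K" using k2 K_def by (simp add: of_nat_diff)
  have KD: "K * D < N"
  proof -
    have "int ((k-1)*d0) < int n0" using lo by (simp only: of_nat_less_iff)
    then show ?thesis using kk D_def N_def by simp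
  qed
  have NkD: "N < (K + 1) * D"
  proof -
    have "int n0 < int (k*d0)" using hi by (simp only: of_nat_less_iff)
    then show ?thesis using K_def D_def N_def by simp
  qed
  have "0 < K * D" using K1 D0 by simp
  then have N0: "0 < N" using KD by linarith
  have "(K + 1) * D = K * D + D" by (simp add: algebra_simps)
  then have L0: "0 < L" "L < D" using KD NkD L_def by linarith+
  have NKL: "N = K * D + L" using L_def by simp
  have Lnat: "L = int (n0 - (k-1)*d0)"
  proof -
    have "int (n0 - (k-1)*d0) = int n0 - int ((k-1)*d0)" using lo by (simp add: of_nat_diff)
    also have "\<dots> = N - K * D" using kk D_def N_def by simp
    finally show ?thesis using L_def by simp
  qed
  define pos where "pos t v = (int (c v) - t) mod N" for t :: int and v
  define F where "F t v = nat (pos t v div D) + 1" for t v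
  define good where "good t v \<longleftrightarrow> pos t v mod D < L" for t v
  have cV: "\<forall>v\<in>V. c v \<in> {1..n0}" and adj: "\<forall>u\<in>V. \<forall>v\<in>V. E u v \<longrightarrow> D \<le> (int (c u) - int (c v)) mod N \<and>
         (int (c u) - int (c v)) mod N \<le> N - D"
  proof -
    have "(\<forall>v\<in>V. c v \<in> {1..n0}) \<and> (\<forall>u\<in>V. \<forall>v\<in>V. E u v \<longrightarrow> int d0 \<le> (int (c u) - int (c v)) mod int n0 \<and>
         (int (c u) - int (c v)) mod int n0 \<le> int n0 - int d0)"
      by (rule nd_mod[OF d0, THEN iffD1, OF ndc])
    then show "\<forall>v\<in>V. c v \<in> {1..n0}" "\<forall>u\<in>V. \<forall>v\<in>V. E u v \<longrightarrow> D \<le> (int (c u) - int (c v)) mod N \<and>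
         (int (c u) - int (c v)) mod N \<le> N - D" unfolding N_def D_def by auto
  qed
  have pr: "0 \<le> pos t v" "pos t v < N" for t v using N0 unfolding pos_def by auto
  have pdiff: "(pos t a - pos t b) mod N = (int (c a) - int (c b)) mod N" for t a b
  proof -
    have "(pos t a - pos t b) mod N = ((int (c a) - t) - (int (c b) - t)) mod N"
      unfolding pos_def by (rule mod_diff_eq)
    then show ?thesis by simp
  qed
  have divr: "0 \<le> pos t v div D" "pos t v div D < K + 1" for t v
    using pr[of t v] D0 NkD div_lt_k[of D "pos t v" "K+1"] by (auto simp: pos_imp_zdiv_nonneg_iff)
  have Finj: "F t a \<noteq> F t b" if "pos t a div D \<noteq> pos t b div D" for t a b
    using that divr[of t a] divr[of t b] unfolding F_def by (simp add: eq_nat_nat_iff)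
  have sepF: "F t a \<noteq> F t b" if "D \<le> (pos t a - pos t b) mod N" "(pos t a - pos t b) mod N \<le> N - D" for t a b
  proof -
    have "pos t b div D \<noteq> pos t a div D"
      by (rule sep_div[OF D0 pr(1)[of t b] pr(2)[of t b] pr(1)[of t a] pr(2)[of t a]]) (use that in auto)
    then show ?thesis using Finj by metis
  qed
  have col: "coloring V E k (F t)" for t
    unfolding coloring_def
  proof (intro conjI ballI impI)
    fix v assume "v \<in> V"
    show "F t v \<in> {1..k}" using divr[of t v] K_def unfolding F_def by auto
  next
    fix u v assume "u \<in> V" "v \<in> V" "E u v"
    then have "D \<le> (pos t u - pos t v) mod N \<and> (pos t u - pos t v) mod N \<le> N - D"
      using adj pdiff[of t u v] by simp
    then show "F t u \<noteq> F t v" using sepF by blast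
  qed
  have paths: "(\<exists>ps. rainbow_path V E (F t) ps \<and> length ps = k - 1 \<and> begins_at ps v) \<and>
       (good t v \<longrightarrow> (\<exists>ps. rainbow_path V E (F t) ps \<and> length ps = k \<and> begins_at ps v))"
    if v: "v \<in> V" for t v
  proof -
    obtain s where s0: "s 0 = v" and sw: "\<forall>i. tight E n0 d0 c (s i) (s (Suc i))"
      using allr v unfolding reach_def by blast
    have sE: "\<forall>i. E (s i) (s (Suc i))" using sw unfolding tight_def by blast
    have md: "(pos t (s j) - pos t (s i)) mod N = int (j - i) * D" if "i < j" "j < k" for i j
    proof -
      have "(int (c (s (i + (j - i)))) - int (c (s i))) mod int n0 = (int (j - i) * int d0) mod int n0"
        using walk_mod[OF sw] by blast
      then have "(pos t (s j) - pos t (s i)) mod N = (int (j - i) * D) mod N"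
        using that pdiff unfolding N_def D_def by simp
      moreover have "int (j - i) \<le> K" using that K_def by auto
      then have "int (j - i) * D \<le> K * D" using D0 by (simp add: mult_right_mono)
      then have "int (j - i) * D < N" using KD by simp
      moreover have "0 \<le> int (j - i) * D" using D0 by simp
      ultimately show ?thesis by (simp add: mod_pos_pos_trivial)
    qed
    have dist: "s i \<noteq> s j" if "i < j" "j < k" for i j
    proof
      assume "s i = s j"
      then have "(pos t (s j) - pos t (s i)) mod N = 0" by simp
      moreover have "0 < int (j - i) * D" using that D0 by simp
      ultimately show False using md[OF that] that D0 by simp
    qed
    have near: "F t (s i) \<noteq> F t (s j)" if "i < j" "j - i \<le> k - 2" "j < k" for i j
    proof -
      have "int (j - i) + 1 \<le> K" using that K_def k2 by auto
      then have "(int (j - i) + 1) * D \<le> K * D" using D0 by (simp add: mult_right_mono)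
      then have "int (j - i) * D \<le> N - D" using KD by (simp add: algebra_simps)
      moreover have "D \<le> int (j - i) * D" using that D0 by simp
      ultimately show ?thesis using sepF[of t "s j" "s i"] md[OF that(1,3)] by metis
    qed
    have p1: "\<exists>ps. rainbow_path V E (F t) ps \<and> length ps = k - 1 \<and> begins_at ps v"
    proof -
      have "rainbow_path V E (F t) (map s [0..<k-1]) \<and> length (map s [0..<k-1]) = k - 1 \<and>
          begins_at (map s [0..<k-1]) (s 0)"
        by (rule walk_path[OF sg sE]) (use k2 dist near in auto)
      then show ?thesis using s0 by blast
    qed
    have p2: "\<exists>ps. rainbow_path V E (F t) ps \<and> length ps = k \<and> begins_at ps v" if g: "good t v"
    proof -
      have far: "F t (s 0) \<noteq> F t (s (k-1))"
      proof -
        have "(pos t (s (k-1)) - pos t (s 0)) mod N = K * D" using md[of 0 "k-1"] k2 K_def by auto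
        then have e: "pos t (s (k-1)) = (pos t (s 0) + K * D) mod N"
          using pr[of t "s (k-1)"] by (metis add.commute diff_add_cancel mod_add_left_eq mod_pos_pos_trivial)
        have "pos t (s 0) div D \<noteq> ((pos t (s 0) + K * D) mod N) div D"
          by (rule good_div[OF D0 L0(1) L0(2) K1 NKL pr(1) pr(2)]) (use g s0 good_def in auto)
        then show ?thesis using Finj e by metis
      qed
      have "rainbow_path V E (F t) (map s [0..<k]) \<and> length (map s [0..<k]) = k \<and>
          begins_at (map s [0..<k]) (s 0)"
      proof (rule walk_path[OF sg sE])
        show "0 < k" using k2 by simp
        fix i j assume ij: "i < j" "j < k"
        show "s i \<noteq> s j \<and> F t (s i) \<noteq> F t (s j)"
        proof (cases "j - i \<le> k - 2")
          case True then show ?thesis using dist near ij by blast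
        next
          case False then have "i = 0" "j = k - 1" using ij by auto
          then show ?thesis using dist ij far by blast
        qed
      qed
      then show ?thesis using s0 by blast
    qed
    show ?thesis using p1 p2 by blast
  qed
  define T where "T = {0..<N}"
  have finT: "finite T" and cardT: "card T = n0" unfolding T_def N_def by auto
  have finV: "finite V" using sg unfolding simple_graph_def by blast
  have cnt: "k * nat L \<le> card {t\<in>T. good t v}" if v: "v \<in> V" for v
  proof -
    define g where "g = (\<lambda>(j::nat, y::nat). (int (c v) - (int j * D + int y)) mod N)"
    have pg: "pos (g (j, y)) v = int j * D + int y" if "j < k" "y < nat L" for j y
    proof -
      have "int j \<le> K" using that K_def by auto
      then have "int j * D \<le> K * D" using D0 by (simp add: mult_right_mono)
      moreover have "int y < L" using that L0 by linarith
      ultimately have lt: "int j * D + int y < N" using NKL by linarith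
      have ge: "0 \<le> int j * D + int y" using D0 by simp
      have "pos (g (j, y)) v = (int (c v) - (int (c v) - (int j * D + int y))) mod N"
        unfolding pos_def g_def by (simp add: mod_diff_right_eq)
      also have "\<dots> = (int j * D + int y) mod N" by simp
      also have "\<dots> = int j * D + int y" by (rule mod_pos_pos_trivial[OF ge lt])
      finally show ?thesis .
    qed
    have mD: "(int j * D + int y) mod D = int y" if "y < nat L" for j y
    proof -
      have "(int j * D + int y) mod D = int y mod D" by simp
      also have "\<dots> = int y" using that L0 by (intro mod_pos_pos_trivial) auto
      finally show ?thesis .
    qed
    have sub: "g ` ({0..<k} \<times> {0..<nat L}) \<subseteq> {t\<in>T. good t v}"
    proof
      fix t assume "t \<in> g ` ({0..<k} \<times> {0..<nat L})"
      then obtain j y where jy: "j < k" "y < nat L" "t = g (j, y)" by auto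
      have "t \<in> T" unfolding T_def g_def jy(3) using N0 by auto
      moreover have "pos t v mod D = int y" using pg[OF jy(1,2)] mD[OF jy(2)] jy(3) by simp
      then have "good t v" unfolding good_def using jy(2) L0 by linarith
      ultimately show "t \<in> {t\<in>T. good t v}" by simp
    qed
    have inj: "inj_on g ({0..<k} \<times> {0..<nat L})"
    proof (rule inj_onI)
      fix a b assume a: "a \<in> {0..<k} \<times> {0..<nat L}" and b: "b \<in> {0..<k} \<times> {0..<nat L}" and e: "g a = g b"
      obtain j y where ajy: "a = (j, y)" by (cases a)
      obtain j' y' where bjy: "b = (j', y')" by (cases b)
      have jy: "j < k" "y < nat L" "j' < k" "y' < nat L" using a b ajy bjy by auto
      have X: "int j * D + int y = int j' * D + int y'" using pg[OF jy(1,2)] pg[OF jy(3,4)] e ajy bjy by simp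
      then have "int y = int y'" using mD[OF jy(2), of j] mD[OF jy(4), of j'] by simp
      then have "int j * D = int j' * D" using X by simp
      then have "j = j'" using D0 by simp
      then show "a = b" using ajy bjy \<open>int y = int y'\<close> by simp
    qed
    have "card (g ` ({0..<k} \<times> {0..<nat L})) = k * nat L"
      using inj by (simp add: card_image card_cartesian_product)
    moreover have "finite {t\<in>T. good t v}" using finT by simp
    ultimately show ?thesis using card_mono[OF _ sub] by simp
  qed
  define S where "S t = {v\<in>V. good t v}" for t
  have swap: "(\<Sum>t\<in>T. card (S t)) = (\<Sum>v\<in>V. card {t\<in>T. good t v})"
  proof -
    have "(\<Sum>t\<in>T. card (S t)) = (\<Sum>t\<in>T. \<Sum>v\<in>V. if good t v then 1 else 0)"
      unfolding S_def using finV by (simp add: sum.inter_filter[symmetric])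
    also have "\<dots> = (\<Sum>v\<in>V. \<Sum>t\<in>T. if good t v then 1 else 0)" by (rule sum.swap)
    also have "\<dots> = (\<Sum>v\<in>V. card {t\<in>T. good t v})"
      using finT by (simp add: sum.inter_filter[symmetric])
    finally show ?thesis .
  qed
  have "(\<Sum>v\<in>V. k * nat L) \<le> (\<Sum>v\<in>V. card {t\<in>T. good t v})" by (rule sum_mono) (rule cnt)
  then have "card V * (k * nat L) \<le> (\<Sum>t\<in>T. card (S t))" unfolding swap by simp
  then obtain t where tT: "t \<in> T" and big: "card V * (k * nat L) \<le> card (S t) * n0"
  proof -
    assume r: "\<And>t. t \<in> T \<Longrightarrow> card V * (k * nat L) \<le> card (S t) * n0 \<Longrightarrow> thesis"
    assume h: "card V * (k * nat L) \<le> (\<Sum>t\<in>T. card (S t))"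
    show thesis
    proof (rule ccontr)
      assume "\<not> thesis"
      then have lt: "\<forall>t\<in>T. card (S t) * n0 < card V * (k * nat L)" using r by force
      have Tne: "T \<noteq> {}" using N0 T_def by auto
      have "(\<Sum>t\<in>T. card (S t) * n0) < (\<Sum>t\<in>T. card V * (k * nat L))"
        by (rule sum_strict_mono[OF finT Tne]) (use lt in auto)
      then have "(\<Sum>t\<in>T. card (S t)) * n0 < n0 * (card V * (k * nat L))"
        using cardT by (simp add: sum_distrib_right)
      then show False using h by (simp add: mult.commute)
    qed
  qed
  have "real k * real (n0 - (k-1)*d0) * real (card V) \<le> real (card (S t)) * real n0"
  proof -
    define X where "X = n0 - (k-1)*d0"
    have "nat L = X" using Lnat X_def by simp
    then have "card V * (k * X) \<le> card (S t) * n0" using big by simp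
    then have "real (card V * (k * X)) \<le> real (card (S t) * n0)" by (simp only: of_nat_le_iff)
    then have "real (card V) * (real k * real X) \<le> real (card (S t)) * real n0" by (simp only: of_nat_mult)
    then show ?thesis unfolding X_def[symmetric] by (simp add: mult_ac)
  qed
  moreover have "S t \<subseteq> V" unfolding S_def by auto
  moreover have "\<forall>u\<in>S t. \<exists>ps. rainbow_path V E (F t) ps \<and> length ps = k \<and> begins_at ps u"
    using paths unfolding S_def by blast
  moreover have "\<forall>v\<in>V - S t. \<exists>ps. rainbow_path V E (F t) ps \<and> length ps = k - 1 \<and> begins_at ps v"
    using paths by blast
  ultimately show ?thesis using col by blast
qed

lemma tight_V:
  assumes "simple_graph V E" "tight E n d c u v"
  shows "u \<in> V" "v \<in> V"
  using assms unfolding simple_graph_def tight_def by blast+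

lemma reach_prepend:
  assumes "tight E n d c u w" "w \<in> reach E n d c"
  shows "u \<in> reach E n d c"
proof -
  obtain s where s: "s 0 = w" "\<forall>i. tight E n d c (s i) (s (Suc i))"
    using assms(2) unfolding reach_def by blast
  define s' where "s' i = (if i = 0 then u else s (i - 1))" for i
  have "\<forall>i. tight E n d c (s' i) (s' (Suc i))"
  proof
    fix i show "tight E n d c (s' i) (s' (Suc i))"
      using s assms(1) unfolding s'_def by (cases i) auto
  qed
  moreover have "s' 0 = u" unfolding s'_def by simp
  ultimately show ?thesis unfolding reach_def by blast
qed

lemma reach_suffix:
  assumes "\<forall>i. tight E n d c (s i) (s (Suc i))"
  shows "s i \<in> reach E n d c"
proof -
  have "\<forall>q. tight E n d c (s (i + q)) (s (Suc (i + q)))" using assms by blast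
  then show ?thesis unfolding reach_def
    by (intro CollectI exI[of _ "\<lambda>q. s (i + q)"]) simp
qed

lemma periodic_reach:
  assumes w: "\<forall>q<m. tight E n d c (s q) (s (Suc q))" and ij: "i < j" "j \<le> m" and eq: "s i = s j"
  shows "s i \<in> reach E n d c"
proof -
  define p where "p = j - i"
  have p0: "0 < p" using ij p_def by simp
  define s' where "s' q = s (i + q mod p)" for q
  have "\<forall>q. tight E n d c (s' q) (s' (Suc q))"
  proof
    fix q
    have lt: "q mod p < p" using p0 by simp
    then have "i + q mod p < m" using p_def ij by linarith
    then have tq: "tight E n d c (s (i + q mod p)) (s (Suc (i + q mod p)))" using w by blast
    show "tight E n d c (s' q) (s' (Suc q))"
    proof (cases "Suc (q mod p) = p")
      case True
      then have "s' (Suc q) = s i" unfolding s'_def by (simp add: mod_Suc)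
      moreover have "Suc (i + q mod p) = j" using True p_def ij by linarith
      then have "s (Suc (i + q mod p)) = s j" by simp
      moreover note tq
      ultimately show ?thesis using eq unfolding s'_def by simp
    next
      case False
      then have "s' (Suc q) = s (Suc (i + q mod p))" unfolding s'_def by (simp add: mod_Suc)
      moreover note tq
      ultimately show ?thesis unfolding s'_def by simp
    qed
  qed
  moreover have "s' 0 = s i" unfolding s'_def by simp
  ultimately show ?thesis unfolding reach_def by blast
qed

lemma walk_bounded:
  assumes sg: "simple_graph V E" and noR: "V \<inter> reach E n d c = {}" and v: "s 0 \<in> V"
    and w: "\<forall>q<m. tight E n d c (s q) (s (Suc q))"
  shows "m < card V"
proof (rule ccontr)
  assume "\<not> m < card V"
  then have big: "card V < card {0..m}" by simp
  have finV: "finite V" using sg unfolding simple_graph_def by blast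
  have sub: "s ` {0..m} \<subseteq> V"
  proof
    fix x assume "x \<in> s ` {0..m}"
    then obtain q where q: "q \<le> m" "x = s q" by auto
    show "x \<in> V"
    proof (cases q)
      case 0 then show ?thesis using v q by simp
    next
      case (Suc q') then show ?thesis using tight_V(2)[OF sg, of n d c "s q'" "s q"] w q by auto
    qed
  qed
  have "\<not> inj_on s {0..m}" using card_inj_on_le[OF _ sub finV] big by auto
  then obtain i j where ij: "i \<le> m" "j \<le> m" "i \<noteq> j" "s i = s j" unfolding inj_on_def by auto
  have "\<exists>a b. a < b \<and> b \<le> m \<and> s a = s b"
  proof (cases "i < j")
    case True then show ?thesis using ij by blast
  next
    case False then show ?thesis using ij by (intro exI[of _ j] exI[of _ i]) auto
  qed
  then obtain a b where ab: "a < b" "b \<le> m" "s a = s b" by blast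
  then have "s a \<in> reach E n d c" using periodic_reach[OF w] by blast
  moreover have "s a \<in> V" using sub ab by auto
  ultimately show False using noR by blast
qed

lemma coprime_scale:
  fixes n0 d0 M :: nat
  assumes "n0 dvd M"
  shows "gcd (n0 * M) (d0 * M + 1) = 1"
proof -
  have c1: "coprime (d0 * M + 1) M"
  proof (rule coprimeI)
    fix p assume "p dvd d0 * M + 1" "p dvd M"
    then have "p dvd d0 * M" by simp
    then have "p dvd 1" using \<open>p dvd d0 * M + 1\<close> dvd_add_right_iff by blast
    then show "is_unit p" by simp
  qed
  have c2: "coprime (d0 * M + 1) n0"
  proof (rule coprimeI)
    fix p assume "p dvd d0 * M + 1" "p dvd n0"
    then have "p dvd M" using assms dvd_trans by blast
    then have "p dvd d0 * M" by simp
    then have "p dvd 1" using \<open>p dvd d0 * M + 1\<close> dvd_add_right_iff by blast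
    then show "is_unit p" by simp
  qed
  have "coprime (d0 * M + 1) (n0 * M)" using c1 c2 by simp
  then show ?thesis by (simp add: coprime_iff_gcd_eq_1 gcd.commute)
qed

lemma scale_contra:
  fixes V :: "'a set" and E and n0 d0 :: nat and c
  assumes sg: "simple_graph V E" and ndc: "nd_coloring V E n0 d0 c" and d0: "0 < d0" and n2: "2*d0 \<le> n0"
    and edge: "E u0 v0" and noR: "V \<inter> reach E n0 d0 c = {}"
  shows "\<exists>N D c'. 0 < N \<and> 0 < D \<and> 2*D \<le> N \<and> gcd N D = 1 \<and> nd_coloring V E N D c' \<and>
     real N / real D < real n0 / real d0"
proof -
  have finV: "finite V" and uv0: "u0 \<in> V" "v0 \<in> V" using sg edge unfolding simple_graph_def by blast+
  have cV0: "0 < card V" using finV uv0 card_gt_0_iff by blast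
  have Esym: "E a b \<Longrightarrow> E b a" for a b using sg unfolding simple_graph_def by blast
  have EV: "E a b \<Longrightarrow> a \<in> V \<and> b \<in> V" for a b using sg unfolding simple_graph_def by blast
  have cr: "v \<in> V \<Longrightarrow> c v \<in> {1..n0}" for v using ndc unfolding nd_coloring_def by blast
  have cadj: "u \<in> V \<Longrightarrow> v \<in> V \<Longrightarrow> E u v \<Longrightarrow> int d0 \<le> \<bar>int (c u) - int (c v)\<bar> \<and>
        \<bar>int (c u) - int (c v)\<bar> \<le> int n0 - int d0" for u v using ndc unfolding nd_coloring_def by blast
  define M where "M = n0 * card V"
  have M1: "card V \<le> M" using M_def n2 d0 by simp
  define P where "P v m \<longleftrightarrow> (\<exists>s. s 0 = v \<and> (\<forall>q<m. tight E n0 d0 c (s q) (s (Suc q))))" for v m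
  define lw where "lw v = (GREATEST m. P v m)" for v
  have Pbound: "v \<in> V \<Longrightarrow> P v m \<Longrightarrow> m \<le> card V" for v m
    unfolding P_def using walk_bounded[OF sg noR] by (metis less_imp_le)
  have P0: "P v 0" for v unfolding P_def by auto
  have lwP: "P v (lw v)" if v: "v \<in> V" for v
    unfolding lw_def by (rule GreatestI_nat[of "P v" 0 "card V"]) (use P0 Pbound v in auto)
  have lw_lt: "v \<in> V \<Longrightarrow> lw v < card V" for v
    using lwP walk_bounded[OF sg noR] unfolding P_def by blast
  have lw_step: "lw w + 1 \<le> lw u" if t: "tight E n0 d0 c u w" for u w
  proof -
    have uw: "u \<in> V" "w \<in> V" using tight_V[OF sg t] by auto
    obtain s where s: "s 0 = w" "\<forall>q<lw w. tight E n0 d0 c (s q) (s (Suc q))"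
      using lwP[OF uw(2)] unfolding P_def by blast
    define s' where "s' i = (if i = 0 then u else s (i - 1))" for i
    have "\<forall>q<lw w + 1. tight E n0 d0 c (s' q) (s' (Suc q))"
    proof (intro allI impI)
      fix q assume "q < lw w + 1"
      then show "tight E n0 d0 c (s' q) (s' (Suc q))"
        using s t unfolding s'_def by (cases q) auto
    qed
    then have "P u (lw w + 1)" unfolding P_def s'_def by (intro exI[of _ s']) (simp add: s'_def)
    then have "lw w + 1 \<le> Greatest (P u)"
      by (intro Greatest_le_nat[of "P u" "lw w + 1" "card V"]) (use Pbound uw in auto)
    then show ?thesis unfolding lw_def[of u] .
  qed
  define c' where "c' v = M * c v - lw v" for v
  define N where "N = n0 * M"
  define D where "D = d0 * M + 1"
  have ic': "int (c' v) = int M * int (c v) - int (lw v)" if "v \<in> V" for v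
  proof -
    have "lw v \<le> M" using lw_lt[OF that] M1 by simp
    also have "M \<le> M * c v" using cr[OF that] by simp
    finally show ?thesis unfolding c'_def by (simp add: of_nat_diff)
  qed
  have key: "int D \<le> int (c' u) - int (c' v) \<and> int (c' u) - int (c' v) \<le> int N - int D"
    if uv: "u \<in> V" "v \<in> V" "E u v" and lt: "c v < c u" for u v
  proof -
    define \<delta> where "\<delta> = int (c u) - int (c v)"
    define Mi where "Mi = int M"
    define lu where "lu = int (lw u)"
    define lv where "lv = int (lw v)"
    have dpos: "0 < \<delta>" using lt \<delta>_def by simp
    have drange: "int d0 \<le> \<delta>" "\<delta> \<le> int n0 - int d0" using cadj[OF uv] dpos \<delta>_def by auto
    have lrange: "0 \<le> lu" "lu \<le> Mi - 1" "0 \<le> lv" "lv \<le> Mi - 1"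
      using lw_lt[OF uv(1)] lw_lt[OF uv(2)] M1 lu_def lv_def Mi_def by auto
    have Delta: "int (c' u) - int (c' v) = Mi * \<delta> - lu + lv"
      using ic'[OF uv(1)] ic'[OF uv(2)] unfolding \<delta>_def Mi_def lu_def lv_def by (simp add: algebra_simps)
    have iD: "int D = Mi * int d0 + 1" and iN: "int N = Mi * int n0" unfolding D_def N_def Mi_def by simp_all
    have tvu: "\<delta> = int d0 \<Longrightarrow> lu + 1 \<le> lv"
    proof -
      assume h: "\<delta> = int d0"
      have "(int (c u) - int (c v)) mod int n0 = int d0" using h \<delta>_def d0 n2 by (simp add: mod_pos_pos_trivial)
      then have "tight E n0 d0 c v u" unfolding tight_def using Esym uv by blast
      then show "lu + 1 \<le> lv" using lw_step lu_def lv_def by fastforce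
    qed
    have tuv: "\<delta> = int n0 - int d0 \<Longrightarrow> lv + 1 \<le> lu"
    proof -
      assume h: "\<delta> = int n0 - int d0"
      have "int (c v) - int (c u) = int d0 + (-1) * int n0" using h \<delta>_def by simp
      then have "(int (c v) - int (c u)) mod int n0 = int d0 mod int n0" by (metis mod_mult_self1)
      then have "(int (c v) - int (c u)) mod int n0 = int d0" using d0 n2 by (simp add: mod_pos_pos_trivial)
      then have "tight E n0 d0 c u v" unfolding tight_def using uv by blast
      then show "lv + 1 \<le> lu" using lw_step lu_def lv_def by fastforce
    qed
    have Md1: "Mi * (int d0 + 1) = Mi * int d0 + Mi" by (simp add: distrib_left)
    have Md2: "Mi * (int n0 - int d0) = Mi * int n0 - Mi * int d0" by (simp add: right_diff_distrib)
    have Md3: "Mi * (int n0 - int d0 - 1) = Mi * int n0 - Mi * int d0 - Mi" by (simp add: right_diff_distrib)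
    note Md = Md1 Md2 Md3
    have Mpos: "0 \<le> Mi" unfolding Mi_def by simp
    show ?thesis
    proof (cases "\<delta> = int d0")
      case True
      then have nd: "\<delta> \<noteq> int n0 - int d0" using tvu tuv by fastforce
      then have "int d0 + 1 \<le> int n0 - int d0" using True drange by simp
      then have "Mi * (int d0 + 1) \<le> Mi * (int n0 - int d0)" using Mpos by (rule mult_left_mono)
      moreover have "Mi * \<delta> = Mi * int d0" using True by simp
      moreover have "lu + 1 \<le> lv" using tvu True by blast
      ultimately show ?thesis using Delta iD iN lrange Md by (smt (verit))
    next
      case False
      show ?thesis
      proof (cases "\<delta> = int n0 - int d0")
        case True
        then have "int d0 + 1 \<le> int n0 - int d0" using False drange by simp
        then have "Mi * (int d0 + 1) \<le> Mi * (int n0 - int d0)" using Mpos by (rule mult_left_mono)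
        moreover have "Mi * \<delta> = Mi * (int n0 - int d0)" using True by simp
        moreover have "lv + 1 \<le> lu" using tuv True by blast
        ultimately show ?thesis using Delta iD iN lrange Md by (smt (verit))
      next
        case False2: False
        have "int d0 + 1 \<le> \<delta>" "\<delta> \<le> int n0 - int d0 - 1" using False False2 drange by auto
        then have "Mi * (int d0 + 1) \<le> Mi * \<delta>" "Mi * \<delta> \<le> Mi * (int n0 - int d0 - 1)"
          using Mpos by (auto intro: mult_left_mono)
        then show ?thesis using Delta iD iN lrange Md by (smt (verit))
      qed
    qed
  qed
  have ndc': "nd_coloring V E N D c'"
    unfolding nd_coloring_def
  proof (rule conjI; intro ballI impI)
    fix v assume v: "v \<in> V"
    have "int (c' v) \<ge> 1" using ic'[OF v] lw_lt[OF v] cr[OF v] M1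
    proof -
      have "int M * 1 \<le> int M * int (c v)" using cr[OF v] by (intro mult_left_mono) auto
      then show ?thesis using ic'[OF v] lw_lt[OF v] M1 by linarith
    qed
    moreover have "int (c' v) \<le> int N"
    proof -
      have "int M * int (c v) \<le> int M * int n0" using cr[OF v] by (simp add: mult_left_mono)
      then show ?thesis using ic'[OF v] unfolding N_def by (simp add: algebra_simps)
    qed
    ultimately show "c' v \<in> {1..N}" by simp
  next
    fix u v assume uv: "u \<in> V" "v \<in> V" "E u v"
    have "c u \<noteq> c v" using cadj[OF uv] d0 by auto
    then consider "c v < c u" | "c u < c v" by linarith
    then show "int D \<le> \<bar>int (c' u) - int (c' v)\<bar> \<and> \<bar>int (c' u) - int (c' v)\<bar> \<le> int N - int D"
    proof cases
      case 1 then show ?thesis using key[OF uv] by auto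
    next
      case 2 then show ?thesis using key[OF uv(2) uv(1) Esym[OF uv(3)]] by auto
    qed
  qed
  have "int D \<le> \<bar>int (c' u0) - int (c' v0)\<bar> \<and> \<bar>int (c' u0) - int (c' v0)\<bar> \<le> int N - int D"
  proof -
    have "\<forall>u\<in>V. \<forall>v\<in>V. E u v \<longrightarrow> int D \<le> \<bar>int (c' u) - int (c' v)\<bar> \<and> \<bar>int (c' u) - int (c' v)\<bar> \<le> int N - int D"
      using ndc' unfolding nd_coloring_def by (rule conjunct2)
    then show ?thesis using uv0 edge by blast
  qed
  then have N2: "2 * D \<le> N" by linarith
  have Dpos: "0 < D" unfolding D_def by simp
  have Npos: "0 < N" using N2 Dpos by simp
  have gcd1: "gcd N D = 1" unfolding N_def D_def M_def by (rule coprime_scale) simp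
  have e: "n0 * D = N * d0 + n0" unfolding N_def D_def by (simp add: algebra_simps)
  have "N * d0 < n0 * D" unfolding e using n2 d0 by simp
  then have "real (N * d0) < real (n0 * D)" by (simp only: of_nat_less_iff)
  then have "real N * real d0 < real n0 * real D" by (simp only: of_nat_mult)
  then have "(real N * real d0) / (real D * real d0) < (real n0 * real D) / (real D * real d0)"
    using d0 Dpos by (intro divide_strict_right_mono) auto
  moreover have "real N / real D = (real N * real d0) / (real D * real d0)" using d0 by simp
  moreover have "real n0 / real d0 = (real n0 * real D) / (real D * real d0)" using Dpos by simp
  ultimately have ratio: "real N / real D < real n0 / real d0" by simp
  show ?thesis
    by (rule exI[of _ N], rule exI[of _ D], rule exI[of _ c']) (use Npos Dpos N2 gcd1 ndc' ratio in simp)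
qed

lemma list_cross:
  assumes "ps \<noteq> []" "hd ps \<notin> A" "last ps \<in> A"
  shows "\<exists>i. Suc i < length ps \<and> ps ! i \<notin> A \<and> ps ! Suc i \<in> A"
  using assms
proof (induction ps)
  case Nil then show ?case by simp
next
  case (Cons x xs)
  show ?case
  proof (cases "xs = []")
    case True then show ?thesis using Cons.prems by simp
  next
    case False
    show ?thesis
    proof (cases "hd xs \<in> A")
      case True
      then show ?thesis using False Cons.prems by (intro exI[of _ 0]) (auto simp: hd_conv_nth)
    next
      case nA: False
      have "last xs \<in> A" using Cons.prems False by simp
      then obtain i where "Suc i < length xs" "xs ! i \<notin> A" "xs ! Suc i \<in> A"
        using Cons.IH False nA by blast
      then show ?thesis by (intro exI[of _ "Suc i"]) simp
    qed
  qed
qed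

lemma cross_edge:
  assumes conn: "connected_graph V E" and AV: "A \<subseteq> V" and a: "a \<in> A" and b: "b \<in> V - A"
  shows "\<exists>x\<in>V - A. \<exists>w\<in>A. E x w"
proof -
  obtain ps where ps: "is_path V E ps" "hd ps = b" "last ps = a"
    using conn a b AV unfolding connected_graph_def by blast
  have ne: "ps \<noteq> []" using ps unfolding is_path_def by blast
  obtain i where i: "Suc i < length ps" "ps ! i \<notin> A" "ps ! Suc i \<in> A"
    using list_cross[OF ne] ps a b by auto
  have "ps ! i \<in> V" using ps(1) i(1) unfolding is_path_def by (meson Suc_lessD nth_mem subsetD)
  moreover have "E (ps ! i) (ps ! Suc i)" using ps(1) i(1) unfolding is_path_def by blast
  ultimately show ?thesis using i by blast
qed

lemma rotate_step:
  fixes V :: "'a set" and E and n0 d0 :: nat and c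
  assumes sg: "simple_graph V E" and conn: "connected_graph V E" and ndc: "nd_coloring V E n0 d0 c"
    and d0: "0 < d0" and n2: "2*d0 \<le> n0"
    and Rne: "V \<inter> reach E n0 d0 c \<noteq> {}" and Xne: "V - reach E n0 d0 c \<noteq> {}"
  shows "\<exists>c2. nd_coloring V E n0 d0 c2 \<and> V \<inter> reach E n0 d0 c \<subset> V \<inter> reach E n0 d0 c2"
proof -
  define R where "R = reach E n0 d0 c"
  have n0: "0 < n0" using d0 n2 by simp
  have finV: "finite V" using sg unfolding simple_graph_def by blast
  have Esym: "E a b \<Longrightarrow> E b a" for a b using sg unfolding simple_graph_def by blast
  have ndm: "(\<forall>v\<in>V. c v \<in> {1..n0}) \<and> (\<forall>u\<in>V. \<forall>v\<in>V. E u v \<longrightarrow> int d0 \<le> (int (c u) - int (c v)) mod int n0 \<and>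
         (int (c u) - int (c v)) mod int n0 \<le> int n0 - int d0)"
    by (rule nd_mod[OF d0, THEN iffD1, OF ndc])
  then have cr: "v \<in> V \<Longrightarrow> c v \<in> {1..n0}" for v by blast
  have adjm: "u \<in> V \<Longrightarrow> v \<in> V \<Longrightarrow> E u v \<Longrightarrow> int d0 \<le> (int (c u) - int (c v)) mod int n0 \<and>
         (int (c u) - int (c v)) mod int n0 \<le> int n0 - int d0" for u v using ndm by blast
  define \<delta> where "\<delta> x w = (int (c w) - int (c x)) mod int n0" for x w
  define Ts where "Ts = {nat (\<delta> x w - int d0) | x w. x \<in> V - R \<and> w \<in> V \<inter> R \<and> E x w}"
  obtain x1 w1 where xw1: "x1 \<in> V - R" "w1 \<in> V \<inter> R" "E x1 w1"
  proof -
    obtain a where a: "a \<in> V \<inter> R" using Rne unfolding R_def by blast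
    obtain b where b: "b \<in> V - (V \<inter> R)" using Xne unfolding R_def by blast
    have "\<exists>x\<in>V - (V \<inter> R). \<exists>w\<in>V \<inter> R. E x w" by (rule cross_edge[OF conn _ a b]) blast
    then obtain x w where "x \<in> V - (V \<inter> R)" "w \<in> V \<inter> R" "E x w" by blast
    then show thesis using that[of x w] by blast
  qed
  have dd: "int d0 < \<delta> x w \<and> \<delta> x w \<le> int n0 - int d0" if xw: "x \<in> V - R" "w \<in> V \<inter> R" "E x w" for x w
  proof -
    have r: "int d0 \<le> \<delta> x w \<and> \<delta> x w \<le> int n0 - int d0" using adjm[of w x] xw Esym unfolding \<delta>_def by blast
    have "\<delta> x w \<noteq> int d0"
    proof
      assume "\<delta> x w = int d0"
      then have "tight E n0 d0 c x w" unfolding tight_def \<delta>_def using xw by blast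
      moreover have "w \<in> reach E n0 d0 c" using xw(2) unfolding R_def by blast
      ultimately have "x \<in> reach E n0 d0 c" by (rule reach_prepend)
      then show False using xw(1) unfolding R_def by blast
    qed
    then show ?thesis using r by simp
  qed
  have finTs: "finite Ts"
  proof -
    have "Ts \<subseteq> (\<lambda>(x, w). nat (\<delta> x w - int d0)) ` (V \<times> V)" unfolding Ts_def by auto
    moreover have "finite ((\<lambda>(x, w). nat (\<delta> x w - int d0)) ` (V \<times> V))" using finV by simp
    ultimately show ?thesis by (rule finite_subset)
  qed
  have Tsne: "Ts \<noteq> {}" unfolding Ts_def using xw1 by blast
  define t where "t = Min Ts"
  have "t \<in> Ts" unfolding t_def by (rule Min_in[OF finTs Tsne])
  then obtain x0 w0 where xw0: "x0 \<in> V - R" "w0 \<in> V \<inter> R" "E x0 w0" and t0: "t = nat (\<delta> x0 w0 - int d0)"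
    unfolding Ts_def by blast
  have tle: "int t \<le> \<delta> x w - int d0" if xw: "x \<in> V - R" "w \<in> V \<inter> R" "E x w" for x w
  proof -
    have "t \<le> nat (\<delta> x w - int d0)" unfolding t_def using xw by (intro Min_le[OF finTs]) (auto simp: Ts_def)
    then show ?thesis using dd[OF xw] by linarith
  qed
  define sh where "sh v = (if v \<in> R then 0 else int t)" for v
  define c2 where "c2 v = (if v \<in> R then c v else nat ((int (c v) - 1 + int t) mod int n0) + 1)" for v
  have c2r: "c2 v \<in> {1..n0}" if v: "v \<in> V" for v
  proof (cases "v \<in> R")
    case True then show ?thesis using cr[OF v] unfolding c2_def by simp
  next
    case False
    have "0 \<le> (int (c v) - 1 + int t) mod int n0" "(int (c v) - 1 + int t) mod int n0 < int n0" using n0 by auto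
    then show ?thesis using False unfolding c2_def by auto
  qed
  have c2mod: "int (c2 v) mod int n0 = (int (c v) + sh v) mod int n0" for v
  proof (cases "v \<in> R")
    case True then show ?thesis unfolding c2_def sh_def by simp
  next
    case False
    have "int (c2 v) = (int (c v) - 1 + int t) mod int n0 + 1"
      using False n0 unfolding c2_def by simp
    then have "int (c2 v) mod int n0 = ((int (c v) - 1 + int t) mod int n0 + 1) mod int n0" by simp
    also have "\<dots> = (int (c v) - 1 + int t + 1) mod int n0" by (rule mod_add_left_eq)
    finally show ?thesis using False unfolding sh_def by simp
  qed
  have c2diff: "(int (c2 u) - int (c2 v)) mod int n0 = ((int (c u) + sh u) - (int (c v) + sh v)) mod int n0" for u v
  proof -
    have "(int (c2 u) - int (c2 v)) mod int n0 = (int (c2 u) mod int n0 - int (c2 v) mod int n0) mod int n0"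
      by (rule mod_diff_eq[symmetric])
    also have "\<dots> = ((int (c u) + sh u) mod int n0 - (int (c v) + sh v) mod int n0) mod int n0"
      by (simp only: c2mod)
    also have "\<dots> = ((int (c u) + sh u) - (int (c v) + sh v)) mod int n0" by (rule mod_diff_eq)
    finally show ?thesis .
  qed
  have crossc: "int d0 \<le> (int (c2 w) - int (c2 x)) mod int n0 \<and> (int (c2 w) - int (c2 x)) mod int n0 \<le> int n0 - int d0 \<and>
      (int (c2 w) - int (c2 x)) mod int n0 = \<delta> x w - int t"
    if xw: "x \<in> V - R" "w \<in> V \<inter> R" "E x w" for x w
  proof -
    have "(int (c2 w) - int (c2 x)) mod int n0 = ((int (c w) - int (c x)) - int t) mod int n0"
      using c2diff[of w x] xw unfolding sh_def by (simp add: algebra_simps)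
    also have "\<dots> = (\<delta> x w - int t) mod int n0" unfolding \<delta>_def by (rule mod_diff_left_eq[symmetric])
    also have "\<dots> = \<delta> x w - int t"
    proof -
      have "0 \<le> int t" "0 < int d0" using d0 by simp_all
      then show ?thesis using dd[OF xw] tle[OF xw] by (intro mod_pos_pos_trivial) linarith+
    qed
    finally show ?thesis using dd[OF xw] tle[OF xw] by simp
  qed
  have ndc2: "nd_coloring V E n0 d0 c2"
  proof (rule nd_mod[OF d0, THEN iffD2], rule conjI)
    show "\<forall>v\<in>V. c2 v \<in> {1..n0}" using c2r by blast
    show "\<forall>u\<in>V. \<forall>v\<in>V. E u v \<longrightarrow> int d0 \<le> (int (c2 u) - int (c2 v)) mod int n0 \<and>
         (int (c2 u) - int (c2 v)) mod int n0 \<le> int n0 - int d0"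
    proof (intro ballI impI)
      fix u v assume uv: "u \<in> V" "v \<in> V" "E u v"
      consider "u \<in> R \<and> v \<in> R" | "u \<notin> R \<and> v \<notin> R" | "u \<in> R \<and> v \<notin> R" | "u \<notin> R \<and> v \<in> R" by blast
      then show "int d0 \<le> (int (c2 u) - int (c2 v)) mod int n0 \<and>
         (int (c2 u) - int (c2 v)) mod int n0 \<le> int n0 - int d0"
      proof cases
        case 1
        then have "(int (c2 u) - int (c2 v)) mod int n0 = (int (c u) - int (c v)) mod int n0"
          using c2diff[of u v] unfolding sh_def by simp
        then show ?thesis using adjm[OF uv] by simp
      next
        case 2
        then have "(int (c2 u) - int (c2 v)) mod int n0 = (int (c u) - int (c v)) mod int n0"
          using c2diff[of u v] unfolding sh_def by simp
        then show ?thesis using adjm[OF uv] by simp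
      next
        case 3
        then show ?thesis using crossc[of v u] uv Esym by blast
      next
        case 4
        then have h: "int d0 \<le> (int (c2 v) - int (c2 u)) mod int n0 \<and> (int (c2 v) - int (c2 u)) mod int n0 \<le> int n0 - int d0"
          using crossc[of u v] uv by blast
        have "- (int (c2 v) - int (c2 u)) = int (c2 u) - int (c2 v)" by simp
        then show ?thesis using mod_cond_neg[of "int d0" "int (c2 v) - int (c2 u)" "int n0"] h d0 by simp
      qed
    qed
  qed
  define R2 where "R2 = reach E n0 d0 c2"
  have sub: "V \<inter> R \<subseteq> R2"
  proof
    fix v assume v: "v \<in> V \<inter> R"
    obtain s where s: "s 0 = v" "\<forall>i. tight E n0 d0 c (s i) (s (Suc i))" using v R_def unfolding reach_def by blast
    have sR: "s i \<in> R" for i using reach_suffix[OF s(2)] R_def by blast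
    have "\<forall>i. tight E n0 d0 c2 (s i) (s (Suc i))"
    proof
      fix i
      have "c2 (s i) = c (s i)" "c2 (s (Suc i)) = c (s (Suc i))" using sR unfolding c2_def by auto
      then show "tight E n0 d0 c2 (s i) (s (Suc i))" using s(2) unfolding tight_def by metis
    qed
    then show "v \<in> R2" unfolding R2_def reach_def using s(1) by blast
  qed
  have "x0 \<in> R2"
  proof -
    have "(int (c2 w0) - int (c2 x0)) mod int n0 = int d0" using crossc[OF xw0] t0 dd[OF xw0] by simp
    then have "tight E n0 d0 c2 x0 w0" unfolding tight_def using xw0 by blast
    moreover have "w0 \<in> R2" using sub xw0 by blast
    ultimately show ?thesis unfolding R2_def by (rule reach_prepend)
  qed
  then have "V \<inter> R \<subset> V \<inter> R2" using sub xw0 by blast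
  then show ?thesis using ndc2 unfolding R_def R2_def by blast
qed

lemma all_reach:
  fixes V :: "'a set" and E and n0 d0 :: nat and c
  assumes sg: "simple_graph V E" and conn: "connected_graph V E" and ndc: "nd_coloring V E n0 d0 c"
    and d0: "0 < d0" and n2: "2*d0 \<le> n0" and edge: "E u0 v0"
    and opt: "\<And>N D c'. 0 < N \<Longrightarrow> 0 < D \<Longrightarrow> 2*D \<le> N \<Longrightarrow> gcd N D = 1 \<Longrightarrow>
       nd_coloring V E N D c' \<Longrightarrow> real n0 / real d0 \<le> real N / real D"
  shows "\<exists>c. nd_coloring V E n0 d0 c \<and> V \<subseteq> reach E n0 d0 c"
proof -
  have finV: "finite V" using sg unfolding simple_graph_def by blast
  have Rne: "V \<inter> reach E n0 d0 c' \<noteq> {}" if nd: "nd_coloring V E n0 d0 c'" for c'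
  proof
    assume "V \<inter> reach E n0 d0 c' = {}"
    from scale_contra[OF sg nd d0 n2 edge this]
    obtain N D c'' where h: "0 < N \<and> 0 < D \<and> 2*D \<le> N \<and> gcd N D = 1 \<and> nd_coloring V E N D c'' \<and>
      real N / real D < real n0 / real d0" by (elim exE)
    have "real n0 / real d0 \<le> real N / real D"
      by (rule opt[of N D c'']) (use h in \<open>simp_all\<close>)
    moreover have lt: "real N / real D < real n0 / real d0" using h by (elim conjE)
    ultimately show False by linarith
  qed
  have main: "\<forall>c. nd_coloring V E n0 d0 c \<longrightarrow> card (V - reach E n0 d0 c) = m \<longrightarrow>
      (\<exists>c'. nd_coloring V E n0 d0 c' \<and> V \<subseteq> reach E n0 d0 c')" for m
  proof (induction m rule: less_induct)
    case (less m)
    show ?case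
    proof (intro allI impI)
      fix c1 assume nd1: "nd_coloring V E n0 d0 c1" and cm: "card (V - reach E n0 d0 c1) = m"
      show "\<exists>c'. nd_coloring V E n0 d0 c' \<and> V \<subseteq> reach E n0 d0 c'"
      proof (cases "V - reach E n0 d0 c1 = {}")
        case True
        then have "V \<subseteq> reach E n0 d0 c1" by blast
        then show ?thesis using nd1 by (intro exI[of _ c1]) simp
      next
        case False
        obtain c2 where nd2: "nd_coloring V E n0 d0 c2" and ps: "V \<inter> reach E n0 d0 c1 \<subset> V \<inter> reach E n0 d0 c2"
          using rotate_step[OF sg conn nd1 d0 n2 Rne[OF nd1] False] by blast
        have "V - reach E n0 d0 c2 \<subset> V - reach E n0 d0 c1" using ps by blast
        moreover have "finite (V - reach E n0 d0 c1)" using finV by simp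
        ultimately have "card (V - reach E n0 d0 c2) < card (V - reach E n0 d0 c1)" by (rule psubset_card_mono[rotated])
        then have "card (V - reach E n0 d0 c2) < m" using cm by simp
        then show ?thesis using less.IH[rule_format, OF _ nd2 refl] by blast
      qed
    qed
  qed
  show ?thesis by (rule main[rule_format, OF ndc refl])
qed

lemma phi_bounds:
  fixes n n' d d' a b :: int
  assumes bz: "n * d' = n' * d + 1" and d: "0 < d" and d': "0 < d'" and n: "0 < n"
    and b1: "1 \<le> b" and ba: "b < a" and an: "a \<le> n - 1" and lo: "d \<le> a - b" and hi: "a - b \<le> n - d"
    and na: "\<not> n dvd a * n'" and nb: "\<not> n dvd b * n'" and n': "0 \<le> n'"
  shows "d' \<le> a * n' div n - b * n' div n \<and> a * n' div n - b * n' div n \<le> n' - d'"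
proof -
  define q where "q = b * n' div n"
  define s where "s = b * n' mod n"
  have bq: "b * n' = q * n + s" unfolding q_def s_def by simp
  have "s \<noteq> 0" using nb unfolding s_def by (simp add: dvd_eq_mod_eq_0)
  moreover have "0 \<le> s" "s < n" using n unfolding s_def by simp_all
  ultimately have s0: "0 < s" "s < n" by simp_all
  have ab: "a * n' = b * n' + (a - b) * n'" by (simp add: algebra_simps)
  have l1: "d * n' \<le> (a - b) * n'" using lo n' by (simp add: mult_right_mono)
  have l2: "(a - b) * n' \<le> (n - d) * n'" using hi n' by (simp add: mult_right_mono)
  have e1: "d * n' = n * d' - 1" using bz by (simp add: algebra_simps)
  have e2: "(n - d) * n' = n * (n' - d') + 1" using bz by (simp add: algebra_simps)
  have low: "(q + d') * n \<le> a * n'" using ab bq l1 e1 s0 by (simp add: algebra_simps)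
  then have "(q + d') * n div n \<le> a * n' div n" using n by (intro zdiv_mono1) auto
  then have L: "q + d' \<le> a * n' div n" using n by simp
  have U: "a * n' div n \<le> q + n' - d'"
  proof (rule ccontr)
    assume "\<not> a * n' div n \<le> q + n' - d'"
    then have g: "q + n' - d' + 1 \<le> a * n' div n" by simp
    have "(q + n' - d' + 1) * n \<le> (a * n' div n) * n" using g n by (simp add: mult_right_mono)
    also have "\<dots> \<le> a * n'"
    proof -
      have "a * n' div n * n + a * n' mod n = a * n'" by (rule div_mult_mod_eq)
      moreover have "0 \<le> a * n' mod n" using n by simp
      ultimately show ?thesis by linarith
    qed
    finally have A: "(q + n' - d' + 1) * n \<le> a * n'" .
    have B: "a * n' \<le> q * n + s + n * (n' - d') + 1" using ab bq l2 e2 by simp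
    have "a * n' = (q + n' - d' + 1) * n"
    proof -
      have "(q + n' - d' + 1) * n = q * n + n * (n' - d') + n" by (simp add: algebra_simps)
      then show ?thesis using A B s0 by linarith
    qed
    then have "n dvd a * n'" by simp
    then show False using na by simp
  qed
  show ?thesis using L U unfolding q_def by linarith
qed

lemma bezout_pos:
  fixes n d :: nat
  assumes "0 < d" "0 < n" "gcd n d = 1"
  shows "\<exists>d' n'. 0 < d' \<and> d' \<le> d \<and> n * d' = n' * d + 1"
proof (cases "d = 1")
  case True
  then show ?thesis using assms by (intro exI[of _ 1] exI[of _ "n - 1"]) simp
next
  case False
  then have d2: "1 < d" using assms by simp
  obtain x y where xy: "n * x = d * y + gcd n d" using bezout_nat[of n d] assms by auto
  then have "n * x = d * y + 1" using assms by simp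
  then have "(n * x) mod d = (1 + d * y) mod d" by simp
  also have "\<dots> = 1 mod d" by (rule mod_mult_self2)
  finally have m1: "(n * x) mod d = 1" using d2 by simp
  define r where "r = x mod d"
  have "(n * r) mod d = (n * x) mod d" unfolding r_def by (simp add: mod_mult_right_eq)
  then have m2: "(n * r) mod d = 1" using m1 by simp
  have r0: "r \<noteq> 0" using m2 by (cases "r = 0") auto
  have rd: "r < d" unfolding r_def using assms by simp
  have "n * r = (n * r div d) * d + 1" using m2 by (metis div_mult_mod_eq)
  then show ?thesis using r0 rd by (intro exI[of _ r] exI[of _ "n * r div d"]) simp
qed

lemma reduce_step:
  fixes V :: "'a set" and E and n d :: nat and c
  assumes sg: "simple_graph V E" and edge: "E u0 v0" and ndc: "nd_coloring V E n d c"
    and d: "0 < d" and n2: "2*d \<le> n" and g: "gcd n d = 1" and big: "card V < n"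
  shows "\<exists>n' d' c'. 0 < n' \<and> 0 < d' \<and> 2*d' \<le> n' \<and> gcd n' d' = 1 \<and> nd_coloring V E n' d' c' \<and>
     n' < n \<and> real n' / real d' \<le> real n / real d"
proof -
  have n: "0 < n" using d n2 by simp
  have finV: "finite V" using sg unfolding simple_graph_def by blast
  have uv0: "u0 \<in> V" "v0 \<in> V" using sg edge unfolding simple_graph_def by blast+
  obtain d' n' where d': "0 < d'" "d' \<le> d" and bz: "n * d' = n' * d + 1"
    using bezout_pos[OF d n g] by blast
  have "n' * d < n * d"
  proof -
    have "n * d' \<le> n * d" using d' by simp
    then show ?thesis using bz by linarith
  qed
  then have n'n: "n' < n" using mult_less_cancel2 by blast
  have n'0: "0 < n'"
  proof (rule ccontr)
    assume "\<not> 0 < n'"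
    then have "n * d' = 1" using bz by simp
    moreover have "n \<le> n * d'" using d' by simp
    ultimately show False using n2 d by linarith
  qed
  have cop1: "coprime n' d'"
  proof (rule coprimeI)
    fix p assume "p dvd n'" "p dvd d'"
    then have "p dvd n * d'" "p dvd n' * d" by simp_all
    then have "p dvd 1" using bz by (metis dvd_add_right_iff)
    then show "is_unit p" by simp
  qed
  have cop2: "coprime n n'"
  proof (rule coprimeI)
    fix p assume "p dvd n" "p dvd n'"
    then have "p dvd n * d'" "p dvd n' * d" by simp_all
    then have "p dvd 1" using bz by (metis dvd_add_right_iff)
    then show "is_unit p" by simp
  qed
  have ndm: "(\<forall>v\<in>V. c v \<in> {1..n}) \<and> (\<forall>u\<in>V. \<forall>v\<in>V. E u v \<longrightarrow> int d \<le> (int (c u) - int (c v)) mod int n \<and>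
         (int (c u) - int (c v)) mod int n \<le> int n - int d)"
    by (rule nd_mod[OF d, THEN iffD1, OF ndc])
  then have cr: "v \<in> V \<Longrightarrow> c v \<in> {1..n}" for v by blast
  have adjm: "u \<in> V \<Longrightarrow> v \<in> V \<Longrightarrow> E u v \<Longrightarrow> int d \<le> (int (c u) - int (c v)) mod int n \<and>
         (int (c u) - int (c v)) mod int n \<le> int n - int d" for u v using ndm by blast
  obtain a where a: "a \<in> {1..n}" "a \<notin> c ` V"
  proof -
    have "card (c ` V) \<le> card V" using finV by (rule card_image_le)
    then have "card (c ` V) < card {1..n}" using big by simp
    then have "\<not> {1..n} \<subseteq> c ` V"
    proof -
      assume lt: "card (c ` V) < card {1..n}"
      show ?thesis
      proof
        assume "{1..n} \<subseteq> c ` V"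
        then have "card {1..n} \<le> card (c ` V)" using finV by (intro card_mono) auto
        then show False using lt by simp
      qed
    qed
    then show thesis using that by blast
  qed
  define j where "j v = (int (c v) - int a) mod int n" for v
  have jr: "1 \<le> j v \<and> j v \<le> int n - 1" if v: "v \<in> V" for v
  proof -
    have "0 \<le> j v" "j v < int n" unfolding j_def using n by simp_all
    moreover have "j v \<noteq> 0"
    proof
      assume "j v = 0"
      then have "int n dvd int (c v) - int a" unfolding j_def by (simp add: dvd_eq_mod_eq_0)
      moreover have "\<bar>int (c v) - int a\<bar> < int n" using cr[OF v] a by auto
      ultimately have "int (c v) - int a = 0"
      proof -
        assume dv: "int n dvd int (c v) - int a" and lt: "\<bar>int (c v) - int a\<bar> < int n"
        show ?thesis
        proof (rule ccontr)
          assume "int (c v) - int a \<noteq> 0"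
          then have "\<bar>int n\<bar> \<le> \<bar>int (c v) - int a\<bar>" using dv by (rule dvd_imp_le_int)
          then show False using lt by simp
        qed
      qed
      then have "c v = a" by simp
      then show False using a(2) v by blast
    qed
    ultimately show ?thesis by linarith
  qed
  have jdiff: "(j u - j v) mod int n = (int (c u) - int (c v)) mod int n" for u v
  proof -
    have "(j u - j v) mod int n = ((int (c u) - int a) - (int (c v) - int a)) mod int n"
      unfolding j_def by (rule mod_diff_eq)
    then show ?thesis by simp
  qed
  have ndv: "\<not> int n dvd j v * int n'" if v: "v \<in> V" for v
  proof
    assume "int n dvd j v * int n'"
    moreover have "coprime (int n) (int n')" using cop2 by simp
    ultimately have "int n dvd j v" using coprime_dvd_mult_left_iff by blast
    moreover have "0 < j v" using jr[OF v] by simp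
    ultimately have "int n \<le> j v" by (rule zdvd_imp_le)
    then show False using jr[OF v] by simp
  qed
  define c' where "c' v = nat ((j v * int n') div int n) + 1" for v
  have phi_r: "0 \<le> (j v * int n') div int n \<and> (j v * int n') div int n < int n'" if v: "v \<in> V" for v
  proof -
    have "0 \<le> j v * int n'" using jr[OF v] by simp
    moreover have "j v * int n' < int n * int n'" using jr[OF v] n'0 by (simp add: mult_strict_right_mono)
    moreover have "j v * int n' < int n' * int n" using \<open>j v * int n' < int n * int n'\<close> by (simp add: mult.commute)
    ultimately have "j v * int n' div int n < int n'" using n by (intro div_lt_k) auto
    moreover have "0 \<le> j v * int n' div int n" using \<open>0 \<le> j v * int n'\<close> n by (simp add: pos_imp_zdiv_nonneg_iff)
    ultimately show ?thesis by simp
  qed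
  have ic': "int (c' v) = (j v * int n') div int n + 1" if v: "v \<in> V" for v
    using phi_r[OF v] unfolding c'_def by simp
  have key: "int d' \<le> int (c' u) - int (c' v) \<and> int (c' u) - int (c' v) \<le> int n' - int d'"
    if uv: "u \<in> V" "v \<in> V" "E u v" and lt: "j v < j u" for u v
  proof -
    have "\<bar>j u - j v\<bar> < int n" using jr[OF uv(1)] jr[OF uv(2)] by auto
    moreover have "int d \<le> (j u - j v) mod int n \<and> (j u - j v) mod int n \<le> int n - int d"
      using adjm[OF uv] jdiff by simp
    ultimately have "int d \<le> \<bar>j u - j v\<bar> \<and> \<bar>j u - j v\<bar> \<le> int n - int d"
      using mod_dist_iff[of "int d" "j u - j v" "int n"] d by simp
    then have r: "int d \<le> j u - j v" "j u - j v \<le> int n - int d" using lt by auto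
    have bzi: "int n * int d' = int n' * int d + 1" using bz by (metis of_nat_1 of_nat_add of_nat_mult)
    have "int d' \<le> j u * int n' div int n - j v * int n' div int n \<and>
        j u * int n' div int n - j v * int n' div int n \<le> int n' - int d'"
      by (rule phi_bounds[OF bzi]) (use d d' n jr[OF uv(1)] jr[OF uv(2)] lt r ndv[OF uv(1)] ndv[OF uv(2)] in auto)
    then show ?thesis using ic'[OF uv(1)] ic'[OF uv(2)] by simp
  qed
  have Esym: "E x y \<Longrightarrow> E y x" for x y using sg unfolding simple_graph_def by blast
  have ndc': "nd_coloring V E n' d' c'"
    unfolding nd_coloring_def
  proof (rule conjI; intro ballI impI)
    fix v assume v: "v \<in> V"
    show "c' v \<in> {1..n'}" using phi_r[OF v] unfolding c'_def by auto
  next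
    fix u v assume uv: "u \<in> V" "v \<in> V" "E u v"
    have "j u \<noteq> j v"
    proof
      assume "j u = j v"
      then have "(int (c u) - int (c v)) mod int n = 0" using jdiff[of u v] by simp
      then show False using adjm[OF uv] d by simp
    qed
    then consider "j v < j u" | "j u < j v" by linarith
    then show "int d' \<le> \<bar>int (c' u) - int (c' v)\<bar> \<and> \<bar>int (c' u) - int (c' v)\<bar> \<le> int n' - int d'"
    proof cases
      case 1 then show ?thesis using key[OF uv] by auto
    next
      case 2 then show ?thesis using key[OF uv(2) uv(1) Esym[OF uv(3)]] by auto
    qed
  qed
  have "int d' \<le> \<bar>int (c' u0) - int (c' v0)\<bar> \<and> \<bar>int (c' u0) - int (c' v0)\<bar> \<le> int n' - int d'"
  proof -
    have "\<forall>u\<in>V. \<forall>v\<in>V. E u v \<longrightarrow> int d' \<le> \<bar>int (c' u) - int (c' v)\<bar> \<and> \<bar>int (c' u) - int (c' v)\<bar> \<le> int n' - int d'"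
      using ndc' unfolding nd_coloring_def by (rule conjunct2)
    then show ?thesis using uv0 edge by blast
  qed
  then have n2': "2 * d' \<le> n'" by linarith
  have g': "gcd n' d' = 1" using cop1 by (simp add: coprime_iff_gcd_eq_1)
  have "n' * d \<le> n * d'" using bz by simp
  then have "real (n' * d) \<le> real (n * d')" by (simp only: of_nat_le_iff)
  then have "real n' * real d \<le> real n * real d'" by (simp only: of_nat_mult)
  then have ratio: "real n' / real d' \<le> real n / real d" using d d' by (simp add: divide_simps)
  show ?thesis
    by (rule exI[of _ n'], rule exI[of _ d'], rule exI[of _ c']) (use n'0 d' n2' g' ndc' n'n ratio in simp)
qed

lemma attain:
  fixes V :: "'a set" and E and n1 d1 :: nat and c1
  assumes sg: "simple_graph V E" and edge: "E u0 v0"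
    and ex: "0 < n1" "0 < d1" "2*d1 \<le> n1" "gcd n1 d1 = 1" "nd_coloring V E n1 d1 c1"
  shows "\<exists>n0 d0 c0. 0 < n0 \<and> 0 < d0 \<and> 2*d0 \<le> n0 \<and> gcd n0 d0 = 1 \<and> nd_coloring V E n0 d0 c0 \<and>
    (\<forall>N D c'. 0 < N \<longrightarrow> 0 < D \<longrightarrow> 2*D \<le> N \<longrightarrow> gcd N D = 1 \<longrightarrow> nd_coloring V E N D c' \<longrightarrow>
       real n0 / real d0 \<le> real N / real D)"
proof -
  define good where "good n d \<longleftrightarrow> 0 < n \<and> 0 < d \<and> 2*d \<le> n \<and> gcd n d = 1 \<and> (\<exists>c. nd_coloring V E n d c)"
    for n d :: nat
  have small: "\<exists>n2 d2. good n2 d2 \<and> n2 \<le> card V \<and> real n2 / real d2 \<le> real n / real d"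
    if "good n d" for n d
    using that
  proof (induction n arbitrary: d rule: less_induct)
    case (less n)
    show ?case
    proof (cases "n \<le> card V")
      case True then show ?thesis using less.prems by (intro exI[of _ n] exI[of _ d]) simp
    next
      case False
      obtain c where nd: "nd_coloring V E n d c" and h: "0 < n" "0 < d" "2*d \<le> n" "gcd n d = 1"
        using less.prems unfolding good_def by auto
      have "card V < n" using False by simp
      from reduce_step[OF sg edge nd h(2) h(3) h(4) this]
      obtain n' d' c' where r: "0 < n' \<and> 0 < d' \<and> 2*d' \<le> n' \<and> gcd n' d' = 1 \<and> nd_coloring V E n' d' c' \<and>
         n' < n \<and> real n' / real d' \<le> real n / real d" by (elim exE)
      have g': "good n' d'" unfolding good_def using r by (intro conjI exI[of _ c']) simp_all
      have "n' < n" using r by simp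
      from less.IH[OF this g'] obtain n2 d2 where "good n2 d2" "n2 \<le> card V" "real n2 / real d2 \<le> real n' / real d'"
        by blast
      moreover have "real n' / real d' \<le> real n / real d" using r by simp
      ultimately show ?thesis by (intro exI[of _ n2] exI[of _ d2]) simp
    qed
  qed
  define T where "T = {p. good (fst p) (snd p) \<and> fst p \<le> card V}"
  have finT: "finite T"
  proof -
    have "T \<subseteq> {0..card V} \<times> {0..card V}" unfolding T_def good_def by auto
    then show ?thesis by (rule finite_subset) simp
  qed
  have g1: "good n1 d1" unfolding good_def using ex by (intro conjI exI[of _ c1]) simp_all
  from small[OF g1] obtain n2 d2 where "good n2 d2 \<and> n2 \<le> card V" by auto
  then have "(n2, d2) \<in> T" unfolding T_def by simp
  then have Tne: "T \<noteq> {}" by auto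
  define rt where "rt p = real (fst p) / real (snd p)" for p :: "nat \<times> nat"
  define q0 where "q0 = Min (rt ` T)"
  have "q0 \<in> rt ` T" unfolding q0_def using finT Tne by (intro Min_in) auto
  then obtain p0 where p0: "p0 \<in> T" "rt p0 = q0" by auto
  have minq: "q0 \<le> rt p" if "p \<in> T" for p unfolding q0_def using finT that by (intro Min_le) auto
  obtain c0 where c0: "nd_coloring V E (fst p0) (snd p0) c0" and h0: "0 < fst p0" "0 < snd p0" "2 * snd p0 \<le> fst p0"
    "gcd (fst p0) (snd p0) = 1"
    using p0(1) unfolding T_def good_def by auto
  have opt: "real (fst p0) / real (snd p0) \<le> real N / real D"
    if "0 < N" "0 < D" "2*D \<le> N" "gcd N D = 1" "nd_coloring V E N D c'" for N D c'
  proof -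
    have "good N D" unfolding good_def using that by (intro conjI exI[of _ c']) simp_all
    from small[OF this] obtain n3 d3 where g3: "good n3 d3" "n3 \<le> card V" and r3: "real n3 / real d3 \<le> real N / real D"
      by auto
    have "(n3, d3) \<in> T" unfolding T_def using g3 by simp
    then have "q0 \<le> rt (n3, d3)" by (rule minq)
    then show ?thesis using p0(2) r3 unfolding rt_def by simp
  qed
  show ?thesis
    by (rule exI[of _ "fst p0"], rule exI[of _ "snd p0"], rule exI[of _ c0]) (use h0 c0 opt in simp)
qed

lemma fewer_colors:
  fixes V :: "'a set" and E and n0 d0 m :: nat and c
  assumes ndc: "nd_coloring V E n0 d0 c" and d0: "0 < d0" and le: "n0 \<le> m * d0"
  shows "\<exists>g. coloring V E m g"
proof -
  have ndm: "(\<forall>v\<in>V. c v \<in> {1..n0}) \<and> (\<forall>u\<in>V. \<forall>v\<in>V. E u v \<longrightarrow> int d0 \<le> (int (c u) - int (c v)) mod int n0 \<and>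
         (int (c u) - int (c v)) mod int n0 \<le> int n0 - int d0)"
    by (rule nd_mod[OF d0, THEN iffD1, OF ndc])
  then have cr: "v \<in> V \<Longrightarrow> c v \<in> {1..n0}" for v by blast
  have adjm: "u \<in> V \<Longrightarrow> v \<in> V \<Longrightarrow> E u v \<Longrightarrow> int d0 \<le> (int (c u) - int (c v)) mod int n0 \<and>
         (int (c u) - int (c v)) mod int n0 \<le> int n0 - int d0" for u v using ndm by blast
  define x where "x v = int (c v) - 1" for v
  define g where "g v = nat (x v div int d0) + 1" for v
  have xr: "v \<in> V \<Longrightarrow> 0 \<le> x v \<and> x v < int n0" for v using cr unfolding x_def by force
  have gr: "v \<in> V \<Longrightarrow> 0 \<le> x v div int d0 \<and> x v div int d0 < int m" for v
  proof -
    assume v: "v \<in> V"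
    have "x v < int m * int d0" using xr[OF v] le by (metis of_nat_le_iff of_nat_mult order_less_le_trans)
    then have "x v div int d0 < int m" using d0 xr[OF v] by (intro div_lt_k) auto
    moreover have "0 \<le> x v div int d0" using xr[OF v] d0 by (simp add: pos_imp_zdiv_nonneg_iff)
    ultimately show ?thesis by simp
  qed
  have "coloring V E m g"
    unfolding coloring_def
  proof (intro conjI ballI impI)
    fix v assume v: "v \<in> V"
    show "g v \<in> {1..m}" using gr[OF v] unfolding g_def by auto
  next
    fix u v assume uv: "u \<in> V" "v \<in> V" "E u v"
    have "(x u - x v) mod int n0 = (int (c u) - int (c v)) mod int n0" unfolding x_def by simp
    then have "x v div int d0 \<noteq> x u div int d0"
      using sep_div[of "int d0" "x v" "int n0" "x u"] d0 xr[OF uv(1)] xr[OF uv(2)] adjm[OF uv] by simp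
    then show "g u \<noteq> g v" using gr[OF uv(1)] gr[OF uv(2)] unfolding g_def by (simp add: eq_nat_nat_iff)
  qed
  then show ?thesis by blast
qed

theorem theorem2:
  fixes V :: "'a set" and E :: "'a \<Rightarrow> 'a \<Rightarrow> bool" and k n d :: nat
  assumes "0 < k" "0 < n" "0 < d" "2 * d \<le> n" "gcd n d = 1"
    and "real n / real d < real k"
    and "simple_graph V E" and "connected_graph V E"
    and "chromatic_number V E = k"
    and "circular_chromatic_number V E = real n / real d"
  shows "\<exists>f S. coloring V E k f \<and> S \<subseteq> V \<and>
           real (card S) \<ge>
             (real (chromatic_number V E) *
                (circular_chromatic_number V E + 1 - real (chromatic_number V E))
              / circular_chromatic_number V E) * real (card V) \<and>
           (\<forall>u\<in>S. \<exists>ps. rainbow_path V E f ps \<and> length ps = k \<and> begins_at ps u) \<and>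
           (\<forall>v\<in>V - S. \<exists>ps. rainbow_path V E f ps \<and> length ps = k - 1 \<and> begins_at ps v)"
proof -
  note kpos = assms(1) and npos = assms(2) and dpos = assms(3) and n2 = assms(4)
  note rk = assms(6) and sg = assms(7) and conn = assms(8) and chi = assms(9) and circ = assms(10)
  have finV: "finite V" using sg unfolding simple_graph_def by blast
  have "2 * real d \<le> real n" using n2 by (metis of_nat_le_iff of_nat_mult of_nat_numeral)
  then have "2 \<le> real n / real d" using dpos by (simp add: pos_le_divide_eq)
  then have "2 < real k" using rk by linarith
  then have k3: "3 \<le> k" by linarith
  have excol: "\<exists>f. coloring V E (card V) f"
  proof -
    obtain h where h: "bij_betw h V {0..<card V}" using ex_bij_betw_finite_nat[OF finV] by blast
    have "coloring V E (card V) (\<lambda>v. h v + 1)"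
      unfolding coloring_def
    proof (intro conjI ballI impI)
      fix v assume "v \<in> V"
      then have "h v < card V" using h unfolding bij_betw_def by auto
      then show "h v + 1 \<in> {1..card V}" by simp
    next
      fix u v assume uv: "u \<in> V" "v \<in> V" "E u v"
      then have "u \<noteq> v" using sg unfolding simple_graph_def by blast
      then have "h u \<noteq> h v" using h uv unfolding bij_betw_def inj_on_def by blast
      then show "h u + 1 \<noteq> h v + 1" by simp
    qed
    then show ?thesis by blast
  qed
  have chidef: "(LEAST k. \<exists>f. coloring V E k f) = k" using chi unfolding chromatic_number_def .
  have "\<exists>f. coloring V E k f"
  proof -
    have "\<exists>f. coloring V E (LEAST k. \<exists>f. coloring V E k f) f"
      by (rule LeastI_ex) (use excol in blast)
    then show ?thesis unfolding chidef .
  qed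
  then obtain f0 where f0: "coloring V E k f0" by blast
  have nok1: "\<not> (\<exists>f. coloring V E (k - 1) f)"
  proof -
    have "k - 1 < (LEAST k. \<exists>f. coloring V E k f)" unfolding chidef using kpos by simp
    then show ?thesis by (rule not_less_Least)
  qed
  obtain u0 v0 where edge: "E u0 v0"
  proof (rule ccontr)
    assume ne: "\<not> thesis"
    have noE: "\<not> E u v" for u v using ne that by blast
    have "coloring V E 1 (\<lambda>_. 1)" unfolding coloring_def using noE by simp
    then have "(LEAST k. \<exists>f. coloring V E k f) \<le> 1" by (intro Least_le) blast
    then show False using chidef k3 by simp
  qed
  have ndk: "nd_coloring V E k 1 f0"
    unfolding nd_coloring_def
  proof (rule conjI; intro ballI impI)
    fix v assume "v \<in> V" then show "f0 v \<in> {1..k}" using f0 unfolding coloring_def by blast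
  next
    fix u v assume uv: "u \<in> V" "v \<in> V" "E u v"
    have "f0 u \<noteq> f0 v" "f0 u \<in> {1..k}" "f0 v \<in> {1..k}" using f0 uv unfolding coloring_def by blast+
    then show "int 1 \<le> \<bar>int (f0 u) - int (f0 v)\<bar> \<and> \<bar>int (f0 u) - int (f0 v)\<bar> \<le> int k - int 1" by auto
  qed
  have "\<exists>n0 d0 c0. 0 < n0 \<and> 0 < d0 \<and> 2*d0 \<le> n0 \<and> gcd n0 d0 = 1 \<and> nd_coloring V E n0 d0 c0 \<and>
    (\<forall>N D c'. 0 < N \<longrightarrow> 0 < D \<longrightarrow> 2*D \<le> N \<longrightarrow> gcd N D = 1 \<longrightarrow> nd_coloring V E N D c' \<longrightarrow>
       real n0 / real d0 \<le> real N / real D)"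
    by (rule attain[OF sg edge _ _ _ _ ndk]) (use k3 in simp_all)
  then obtain n0 d0 c0 where H: "0 < n0 \<and> 0 < d0 \<and> 2*d0 \<le> n0 \<and> gcd n0 d0 = 1 \<and> nd_coloring V E n0 d0 c0 \<and>
    (\<forall>N D c'. 0 < N \<longrightarrow> 0 < D \<longrightarrow> 2*D \<le> N \<longrightarrow> gcd N D = 1 \<longrightarrow> nd_coloring V E N D c' \<longrightarrow>
       real n0 / real d0 \<le> real N / real D)" by (elim exE)
  then have h0: "0 < n0" "0 < d0" "2*d0 \<le> n0" "gcd n0 d0 = 1" and nd0: "nd_coloring V E n0 d0 c0" by simp_all
  have A: "\<forall>N D c'. 0 < N \<longrightarrow> 0 < D \<longrightarrow> 2*D \<le> N \<longrightarrow> gcd N D = 1 \<longrightarrow> nd_coloring V E N D c' \<longrightarrow>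
       real n0 / real d0 \<le> real N / real D"
    using H by (rule conjunct2[THEN conjunct2, THEN conjunct2, THEN conjunct2, THEN conjunct2])
  have opt: "real n0 / real d0 \<le> real N / real D"
    if a: "0 < N" "0 < D" "2*D \<le> N" "gcd N D = 1" "nd_coloring V E N D c'" for N D c'
    using A[rule_format, OF a] .
  have r0: "real n0 / real d0 = real n / real d"
  proof -
    have "circular_chromatic_number V E = real n0 / real d0"
      unfolding circular_chromatic_number_def
    proof (rule cInf_eq_minimum)
      show "real n0 / real d0 \<in> {real n / real d |n d. 0 < n \<and> 0 < d \<and> 2 * d \<le> n \<and> gcd n d = 1 \<and> (\<exists>c. nd_coloring V E n d c)}"
        by (intro CollectI exI[of _ n0] exI[of _ d0]) (use h0 nd0 in auto)
    next
      fix x assume "x \<in> {real n / real d |n d. 0 < n \<and> 0 < d \<and> 2 * d \<le> n \<and> gcd n d = 1 \<and> (\<exists>c. nd_coloring V E n d c)}"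
      then obtain N D c' where "x = real N / real D" "0 < N" "0 < D" "2 * D \<le> N" "gcd N D = 1" "nd_coloring V E N D c'"
        by auto
      then show "real n0 / real d0 \<le> x" using opt by simp
    qed
    then show ?thesis using circ by simp
  qed
  have "\<exists>c. nd_coloring V E n0 d0 c \<and> V \<subseteq> reach E n0 d0 c"
    by (rule all_reach[OF sg conn nd0 h0(2) h0(3) edge]) (rule opt, assumption+)
  then obtain c where ndc: "nd_coloring V E n0 d0 c" and allr: "V \<subseteq> reach E n0 d0 c" by blast
  have hi: "n0 < k * d0"
  proof -
    have "real n0 / real d0 < real k" using r0 rk by simp
    then have "real n0 < real k * real d0" using h0 by (simp add: divide_less_eq)
    then have "real n0 < real (k * d0)" by simp
    then show ?thesis by (simp only: of_nat_less_iff)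
  qed
  have lo: "(k-1)*d0 < n0"
  proof (rule ccontr)
    assume "\<not> (k-1)*d0 < n0"
    then have "n0 \<le> (k-1) * d0" by simp
    then have "\<exists>g. coloring V E (k-1) g" by (rule fewer_colors[OF ndc h0(2)])
    then show False using nok1 by blast
  qed
  obtain f S where fS: "coloring V E k f" "S \<subseteq> V"
    and bnd: "real k * real (n0 - (k-1)*d0) * real (card V) \<le> real (card S) * real n0"
    and P1: "\<forall>u\<in>S. \<exists>ps. rainbow_path V E f ps \<and> length ps = k \<and> begins_at ps u"
    and P2: "\<forall>v\<in>V - S. \<exists>ps. rainbow_path V E f ps \<and> length ps = k - 1 \<and> begins_at ps v"
  proof -
    have "\<exists>f S. coloring V E k f \<and> S \<subseteq> V \<and>
     real k * real (n0 - (k-1)*d0) * real (card V) \<le> real (card S) * real n0 \<and>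
     (\<forall>u\<in>S. \<exists>ps. rainbow_path V E f ps \<and> length ps = k \<and> begins_at ps u) \<and>
     (\<forall>v\<in>V - S. \<exists>ps. rainbow_path V E f ps \<and> length ps = k - 1 \<and> begins_at ps v)"
      by (rule final_part[OF sg ndc h0(2) _ lo hi allr]) (use k3 in simp)
    then show ?thesis using that by (elim exE conjE) 
  qed
  have X: "real (n0 - (k-1)*d0) = real n0 - (real k - 1) * real d0"
    using lo k3 by (simp add: of_nat_diff)
  have "(real k * (real n / real d + 1 - real k) / (real n / real d)) * real (card V)
        = (real k * real (n0 - (k-1)*d0) * real (card V)) / real n0"
    unfolding r0[symmetric] X using h0 by (simp add: field_simps)
  also have "\<dots> \<le> real (card S)" using bnd h0 by (simp add: divide_le_eq)
  finally have B: "(real k * (real n / real d + 1 - real k) / (real n / real d)) * real (card V) \<le> real (card S)" .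
  show ?thesis
    by (rule exI[of _ f], rule exI[of _ S]) (use fS B P1 P2 chi circ in simp)
qed

end
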